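(* Consider linear implicit models $Ex_{t+1}=Fx_t+Ku_t$ with $E,F\in\mathbb{R}^{n\times n}$, $K\in\mathbb{R}^{n\times m}$. (i) If there exist $\epsilon>0$ and $\alpha\in(0,1)$ such that $E+E^\top\succ\epsilon I$, $E\in\mathbb{M}^n$, $F\ge0$, $K\ge0$ and $\mathbf{1}^\top(\alpha E-F)\ge0$, then $E$ is invertible and the explicit system $x_{t+1}=Ax_t+Bu_t$ with $A=E^{-1}F$, $B=E^{-1}K$ is a positive linear system with $A$ Schur stable (all eigenvalues of modulus $<1$). (ii) Conversely, for every $A\in\mathbb{R}^{n\times n}$ with $A\ge0$ Schur stable and every $B\in\mathbb{R}^{n\times m}$ with $B\ge0$, there exist $E$ (which can be taken diagonal with positive diagonal), $F$, $K$, $\epsilon>0$ and $\alpha\in(0,1)$ satisfying all conditions in (i) with $E^{-1}F=A$ and $E^{-1}K=B$. Hence these conditions parametrize exactly all stable discrete-time positive linear systems.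
   Context: Inequalities between vectors/matrices are elementwise; $\mathbf{1}$ is the all-ones column vector; $M\succ0$ means positive definite. $\mathbb{M}^n$ is the set of $n\times n$ nonsingular M-matrices: real matrices with off-diagonal entries $\le0$ and all eigenvalues having positive real part. A discrete-time linear system $x_{t+1}=Ax_t+Bu_t$ is positive if $x_0\ge0$ and $u_t\ge0$ for all $t$ imply $x_t\ge0$ for all $t$ (equivalently $A\ge0$, $B\ge0$). *)

theory Defs
  imports "HOL-Analysis.Analysis"
begin

definition cmat :: "real^'n^'n \<Rightarrow> complex^'n^'n" where
  "cmat A = (\<chi> i j. complex_of_real (A $ i $ j))"

definition is_eigenvalue :: "real^'n^'n \<Rightarrow> complex \<Rightarrow> bool" where
  "is_eigenvalue A lam \<longleftrightarrow> (\<exists>v::complex^'n. v \<noteq> 0 \<and> cmat A *v v = lam *s v)"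

definition schur_stable :: "real^'n^'n \<Rightarrow> bool" where
  "schur_stable A \<longleftrightarrow> (\<forall>lam. is_eigenvalue A lam \<longrightarrow> cmod lam < 1)"

definition M_matrix :: "real^'n^'n \<Rightarrow> bool" where
  "M_matrix E \<longleftrightarrow> (\<forall>i j. i \<noteq> j \<longrightarrow> E $ i $ j \<le> 0) \<and>
                   (\<forall>lam. is_eigenvalue E lam \<longrightarrow> Re lam > 0)"

definition pos_def :: "real^'n^'n \<Rightarrow> bool" where
  "pos_def M \<longleftrightarrow> (\<forall>x. x \<noteq> 0 \<longrightarrow> x \<bullet> (M *v x) > 0)"

definition nonneg_mat :: "real^'m^'n \<Rightarrow> bool" where
  "nonneg_mat A \<longleftrightarrow> (\<forall>i j. 0 \<le> A $ i $ j)"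

definition nonneg_vec :: "real^'n \<Rightarrow> bool" where
  "nonneg_vec x \<longleftrightarrow> (\<forall>i. 0 \<le> x $ i)"

fun traj :: "real^'n^'n \<Rightarrow> real^'m^'n \<Rightarrow> real^'n \<Rightarrow> (nat \<Rightarrow> real^'m) \<Rightarrow> nat \<Rightarrow> real^'n" where
  "traj A B x0 u 0 = x0"
| "traj A B x0 u (Suc t) = A *v traj A B x0 u t + B *v u t"

definition positive_system :: "real^'n^'n \<Rightarrow> real^'m^'n \<Rightarrow> bool" where
  "positive_system A B \<longleftrightarrow>
     (\<forall>x0 u. nonneg_vec x0 \<and> (\<forall>t. nonneg_vec (u t)) \<longrightarrow> (\<forall>t. nonneg_vec (traj A B x0 u t)))"

definition implicit_conds :: "real^'n^'n \<Rightarrow> real^'n^'n \<Rightarrow> real^'m^'n \<Rightarrow> real \<Rightarrow> real \<Rightarrow> bool" where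
  "implicit_conds E F K eps alpha \<longleftrightarrow>
     eps > 0 \<and> 0 < alpha \<and> alpha < 1 \<and>
     pos_def (E + transpose E - eps *\<^sub>R mat 1) \<and>
     M_matrix E \<and> nonneg_mat F \<and> nonneg_mat K \<and>
     (\<forall>j. 0 \<le> (\<Sum>i\<in>UNIV. alpha * E $ i $ j - F $ i $ j))"

end

theory Submission
  imports Defs "Jordan_Normal_Form.Spectral_Radius"
begin
no_notation vec_index (infixl "$" 100)

definition gidx :: "nat \<Rightarrow> 'n::finite" where
  "gidx = (SOME g. bij_betw g {0..<CARD('n)} UNIV)"

lemma gidx_bij: "bij_betw (gidx :: nat \<Rightarrow> 'n::finite) {0..<CARD('n)} UNIV"
proof -
  have "\<exists>g. bij_betw (g :: nat \<Rightarrow> 'n) {0..<CARD('n)} UNIV"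
    using ex_bij_betw_nat_finite[of "UNIV::'n set"] by simp
  then show ?thesis unfolding gidx_def by (rule someI_ex)
qed

definition hidx :: "'n::finite \<Rightarrow> nat" where
  "hidx = the_inv_into {0..<CARD('n)} gidx"

lemma hidx_lt: "hidx (x::'n::finite) < CARD('n)"
  unfolding hidx_def using the_inv_into_into[OF bij_betw_imp_inj_on[OF gidx_bij], of x "{0..<CARD('n)}"]
    gidx_bij[where 'n='n] by (auto simp: bij_betw_def)

lemma gidx_hidx[simp]: "gidx (hidx (x::'n::finite)) = x"
  unfolding hidx_def using f_the_inv_into_f[OF bij_betw_imp_inj_on[OF gidx_bij], of x]
    gidx_bij[where 'n='n] by (auto simp: bij_betw_def)

lemma hidx_gidx[simp]: "i < CARD('n::finite) \<Longrightarrow> hidx (gidx i :: 'n) = i"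
  unfolding hidx_def using the_inv_into_f_f[OF bij_betw_imp_inj_on[OF gidx_bij[where 'n='n]], of i]
  by auto

lemma sum_reindex_gidx: "(\<Sum>x\<in>UNIV. f x) = (\<Sum>i\<in>{0..<CARD('n::finite)}. f (gidx i :: 'n))"
  using sum.reindex_bij_betw[OF gidx_bij[where 'n='n], of f] by simp

lemma gidx_inj: "i < CARD('n::finite) \<Longrightarrow> j < CARD('n) \<Longrightarrow> (gidx i :: 'n) = gidx j \<longleftrightarrow> i = j"
  by (metis hidx_gidx)

definition MC :: "real^'n^'n \<Rightarrow> complex mat" where
  "MC X = Matrix.mat CARD('n) CARD('n) (\<lambda>(i,j). complex_of_real (X $ gidx i $ gidx j))"

lemma MC_carrier: "MC (X::real^'n^'n) \<in> carrier_mat CARD('n) CARD('n)"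
  by (simp add: MC_def)

lemma L1:
  fixes X :: "real^'n^'n"
  assumes "eigenvalue (MC X) ev"
  shows "is_eigenvalue X ev"
proof -
  let ?n = "CARD('n)"
  from assms obtain v where v: "v \<in> carrier_vec ?n" "v \<noteq> 0\<^sub>v ?n" "MC X *\<^sub>v v = ev \<cdot>\<^sub>v v"
    unfolding eigenvalue_def eigenvector_def MC_def by auto
  define w :: "complex^'n" where "w = (\<chi> x. vec_index v (hidx x))"
  have "cmat X *v w = ev *s w"
  proof (rule Finite_Cartesian_Product.vec_eq_iff[THEN iffD2], rule allI)
    fix x :: 'n
    have "(cmat X *v w) $ x = (\<Sum>y\<in>UNIV. complex_of_real (X$x$y) * vec_index v (hidx y))"
      by (simp add: cmat_def matrix_vector_mult_def w_def)
    also have "\<dots> = (\<Sum>j\<in>{0..<?n}. complex_of_real (X$x$gidx j) * vec_index v j)"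
      by (subst sum_reindex_gidx) (rule sum.cong, auto)
    also have "\<dots> = vec_index (MC X *\<^sub>v v) (hidx x)"
      using v(1) hidx_lt[of x] by (simp add: MC_def scalar_prod_def)
    also have "\<dots> = ev * vec_index v (hidx x)"
      using v(3) v(1) hidx_lt[of x] by simp
    also have "\<dots> = (ev *s w) $ x" by (simp add: w_def)
    finally show "(cmat X *v w) $ x = (ev *s w) $ x" .
  qed
  moreover have "w \<noteq> 0"
  proof
    assume w0: "w = 0"
    have "v = 0\<^sub>v ?n"
    proof (rule eq_vecI)
      fix i assume i: "i < dim_vec (0\<^sub>v ?n :: complex vec)"
      then have "vec_index v i = w $ gidx i" by (simp add: w_def)
      then show "vec_index v i = vec_index (0\<^sub>v ?n) i" using w0 i by simp
    qed (use v(1) in auto)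
    with v(2) show False by simp
  qed
  ultimately show ?thesis unfolding is_eigenvalue_def by blast
qed

lemma L1':
  fixes X :: "real^'n^'n"
  assumes "is_eigenvalue X ev"
  shows "eigenvalue (MC X) ev"
proof -
  let ?n = "CARD('n)"
  from assms obtain w where w: "w \<noteq> 0" "cmat X *v w = ev *s w"
    unfolding is_eigenvalue_def by auto
  define v where "v = Matrix.vec ?n (\<lambda>i. w $ gidx i)"
  have vc: "v \<in> carrier_vec ?n" by (simp add: v_def)
  have "MC X *\<^sub>v v = ev \<cdot>\<^sub>v v"
  proof (rule eq_vecI)
    fix i assume i: "i < dim_vec (ev \<cdot>\<^sub>v v)"
    then have i: "i < ?n" by (simp add: v_def)
    have "vec_index (MC X *\<^sub>v v) i = (\<Sum>j\<in>{0..<?n}. complex_of_real (X$gidx i$gidx j) * w $ gidx j)"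
      using i by (simp add: MC_def scalar_prod_def v_def)
    also have "\<dots> = (\<Sum>y\<in>UNIV. complex_of_real (X$gidx i$y) * w $ y)"
      by (subst sum_reindex_gidx) simp
    also have "\<dots> = (cmat X *v w) $ gidx i"
      by (simp add: cmat_def matrix_vector_mult_def)
    also have "\<dots> = ev * w $ gidx i" using w(2) by simp
    also have "\<dots> = vec_index (ev \<cdot>\<^sub>v v) i" using i by (simp add: v_def)
    finally show "vec_index (MC X *\<^sub>v v) i = vec_index (ev \<cdot>\<^sub>v v) i" .
  qed (simp add: MC_def v_def)
  moreover have "v \<noteq> 0\<^sub>v ?n"
  proof
    assume v0: "v = 0\<^sub>v ?n"
    have "w = 0"
    proof (rule Finite_Cartesian_Product.vec_eq_iff[THEN iffD2], rule allI)
      fix x :: 'n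
      have "w $ x = vec_index v (hidx x)" using hidx_lt[of x] by (simp add: v_def)
      then show "w $ x = 0 $ x" using v0 hidx_lt[of x] by simp
    qed
    with w(1) show False by simp
  qed
  ultimately show ?thesis unfolding eigenvalue_def eigenvector_def using vc
    by (auto simp: MC_def)
qed

fun mpow :: "real^'n^'n \<Rightarrow> nat \<Rightarrow> real^'n^'n" where
  "mpow A 0 = Finite_Cartesian_Product.mat 1"
| "mpow A (Suc k) = mpow A k ** A"

lemma L2:
  fixes X :: "real^'n^'n"
  assumes "i < CARD('n)" "j < CARD('n)"
  shows "(MC X ^\<^sub>m k) $$ (i,j) = complex_of_real (mpow X k $ gidx i $ gidx j)"
  using assms
proof (induct k arbitrary: i j)
  case 0
  then show ?case by (simp add: MC_def Finite_Cartesian_Product.mat_def gidx_inj)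
next
  case (Suc k)
  let ?n = "CARD('n)"
  have "(MC X ^\<^sub>m Suc k) $$ (i,j) = (\<Sum>l\<in>{0..<?n}. (MC X ^\<^sub>m k) $$ (i,l) * MC X $$ (l,j))"
    using Suc.prems MC_carrier[of X] by (simp add: scalar_prod_def)
  also have "\<dots> = (\<Sum>l\<in>{0..<?n}. complex_of_real (mpow X k $ gidx i $ gidx l * X $ gidx l $ gidx j))"
    using Suc by (intro sum.cong) (auto simp: MC_def)
  also have "\<dots> = complex_of_real (\<Sum>y\<in>UNIV. mpow X k $ gidx i $ y * X $ y $ gidx j)"
    by (subst sum_reindex_gidx) simp
  also have "\<dots> = complex_of_real (mpow X (Suc k) $ gidx i $ gidx j)"
    by (simp add: matrix_matrix_mult_def)
  finally show ?case .
qed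

lemma mpow_scale: "mpow (c *\<^sub>R A) k = (c^k) *\<^sub>R mpow A k"
  by (induct k) (simp_all add: matrix_scalar_ac scalar_matrix_assoc[symmetric])

lemma eig_scale:
  fixes A :: "real^'n^'n"
  assumes "is_eigenvalue (s *\<^sub>R A) mu" "s \<noteq> 0"
  shows "is_eigenvalue A (mu / complex_of_real s)"
proof -
  from assms obtain w where w: "w \<noteq> 0" "cmat (s *\<^sub>R A) *v w = mu *s w"
    unfolding is_eigenvalue_def by auto
  have "cmat A *v w = (mu / complex_of_real s) *s w"
  proof (rule Finite_Cartesian_Product.vec_eq_iff[THEN iffD2], rule allI)
    fix i
    have "complex_of_real s * (cmat A *v w) $ i = (cmat (s *\<^sub>R A) *v w) $ i"
      by (simp add: cmat_def matrix_vector_mult_def sum_distrib_left mult.assoc)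
    also have "\<dots> = mu * w $ i" using w(2) by simp
    finally show "(cmat A *v w) $ i = ((mu / complex_of_real s) *s w) $ i"
      using assms(2) by (simp add: field_simps)
  qed
  with w(1) show ?thesis unfolding is_eigenvalue_def by blast
qed

lemma schur_power_bound:
  fixes A :: "real^'n^'n"
  assumes "schur_stable A"
  shows "\<exists>\<beta> c. 0 < \<beta> \<and> \<beta> < 1 \<and> (\<forall>k x y. \<bar>mpow A k $ x $ y\<bar> \<le> c * \<beta>^k)"
proof -
  let ?n = "CARD('n)"
  have n: "?n > 0" by simp
  have M0: "MC A \<in> carrier_mat ?n ?n" by (rule MC_carrier)
  define \<rho> where "\<rho> = spectral_radius (MC A)"
  from spectral_radius_mem_max(1)[OF M0 n] obtain ev where ev: "eigenvalue (MC A) ev" "\<rho> = norm ev"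
    unfolding spectrum_def \<rho>_def by auto
  then have \<rho>1: "\<rho> < 1" using L1[OF ev(1)] assms unfolding schur_stable_def by auto
  have \<rho>0: "0 \<le> \<rho>" using ev(2) by simp
  define \<beta> where "\<beta> = (1+\<rho>)/2"
  have \<beta>: "0 < \<beta>" "\<beta> < 1" "\<rho> < \<beta>" using \<rho>0 \<rho>1 by (auto simp: \<beta>_def)
  have evb: "cmod l \<le> \<rho>" if "is_eigenvalue A l" for l
    using spectral_radius_mem_max(2)[OF M0 n, of "cmod l"] L1'[OF that]
    unfolding \<rho>_def spectrum_def by auto
  define A' where "A' = (1/\<beta>) *\<^sub>R A"
  have M1: "MC A' \<in> carrier_mat ?n ?n" by (rule MC_carrier)
  have "spectral_radius (MC A') < 1"
  proof -
    from spectral_radius_mem_max(1)[OF M1 n] obtain mu where mu: "eigenvalue (MC A') mu"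
      "spectral_radius (MC A') = norm mu"
      unfolding spectrum_def by auto
    have "is_eigenvalue A (mu / complex_of_real (1/\<beta>))"
      using eig_scale[of "1/\<beta>" A mu] L1[OF mu(1)] \<beta> unfolding A'_def by simp
    then have "cmod (mu / complex_of_real (1/\<beta>)) \<le> \<rho>" by (rule evb)
    then have "cmod mu * \<beta> \<le> \<rho>" using \<beta> by (simp add: norm_divide norm_mult)
    then have "cmod mu * \<beta> < 1 * \<beta>" using \<beta> by linarith
    then have "cmod mu < 1" using \<beta> mult_right_less_imp_less[of "cmod mu" \<beta> 1] by simp
    then show ?thesis using mu(2) by simp
  qed
  from spectral_radius_jnf_norm_bound_less_1_upper_triangular[OF M1 this]
  obtain c where c: "\<And>k. norm_bound (MC A' ^\<^sub>m k) c" by auto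
  have "\<bar>mpow A k $ x $ y\<bar> \<le> c * \<beta>^k" for k x y
  proof -
    have "norm ((MC A' ^\<^sub>m k) $$ (hidx x, hidx y)) \<le> c"
      using c[of k] hidx_lt[of x] hidx_lt[of y] M1 unfolding norm_bound_def by auto
    then have "\<bar>mpow A' k $ x $ y\<bar> \<le> c"
      using L2[OF hidx_lt[of x] hidx_lt[of y], of A' k] by simp
    then have "(1/\<beta>)^k * \<bar>mpow A k $ x $ y\<bar> \<le> c"
      using \<beta> by (simp add: A'_def mpow_scale abs_mult)
    then show ?thesis using \<beta> by (simp add: field_simps)
  qed
  with \<beta> show ?thesis by blast
qed

lemma quad: "x \<bullet> ((M::real^'n^'n) *v x) = (\<Sum>i\<in>UNIV. \<Sum>j\<in>UNIV. x$i * M$i$j * x$j)"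
  by (simp add: inner_vec_def matrix_vector_mult_def sum_distrib_left mult.assoc)

lemma nonneg_mult: "nonneg_mat (A::real^'k^'n) \<Longrightarrow> nonneg_mat (B::real^'m^'k) \<Longrightarrow> nonneg_mat (A ** B)"
  unfolding nonneg_mat_def by (simp add: matrix_matrix_mult_def sum_nonneg)

lemma nonneg_mv: "nonneg_mat (A::real^'k^'n) \<Longrightarrow> nonneg_vec x \<Longrightarrow> nonneg_vec (A *v x)"
  unfolding nonneg_mat_def nonneg_vec_def by (simp add: matrix_vector_mult_def sum_nonneg)

lemma Z_pd_monotone:
  fixes E :: "real^'n^'n"
  assumes Z: "\<forall>i j. i \<noteq> j \<longrightarrow> E$i$j \<le> 0"
    and pd: "\<forall>x. x \<noteq> 0 \<longrightarrow> x \<bullet> (E *v x) > 0"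
    and b: "\<forall>i. 0 \<le> (E *v x)$i"
  shows "0 \<le> x$i"
proof -
  define y :: "real^'n" where "y = (\<chi> i. min (x$i) 0)"
  have "y \<bullet> (E *v x) = (\<Sum>i\<in>UNIV. y$i * (E *v x)$i)" by (simp add: inner_vec_def)
  also have "\<dots> \<le> 0"
    by (rule sum_nonpos) (use b in \<open>auto simp: y_def intro!: mult_nonpos_nonneg\<close>)
  finally have yx: "y \<bullet> (E *v x) \<le> 0" .
  have "y \<bullet> (E *v x) - y \<bullet> (E *v y) = y \<bullet> (E *v (x - y))"
    by (simp add: matrix_vector_mult_diff_distrib inner_diff_right)
  also have "\<dots> = (\<Sum>i\<in>UNIV. \<Sum>j\<in>UNIV. y$i * (E$i$j * (x$j - y$j)))"
    by (simp add: inner_vec_def matrix_vector_mult_def sum_distrib_left)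
  also have "\<dots> \<ge> 0"
  proof (intro sum_nonneg)
    fix i j
    show "0 \<le> y$i * (E$i$j * (x$j - y$j))"
    proof (cases "i = j")
      case True
      then show ?thesis by (cases "x$i \<le> 0") (auto simp: y_def)
    next
      case False
      have "y$i \<le> 0" "E$i$j \<le> 0" "x$j - y$j \<ge> 0" using Z False by (auto simp: y_def)
      then show ?thesis by (simp add: mult_nonpos_nonpos mult_nonpos_nonneg)
    qed
  qed
  finally have "y \<bullet> (E *v y) \<le> 0" using yx by linarith
  then have "y = 0" using pd by force
  then have "min (x$i) 0 = 0" unfolding y_def by (metis vec_lambda_beta zero_index)
  then show ?thesis by simp
qed

lemma matrix_inv_props:
  fixes E :: "real^'n^'n"
  assumes "invertible E"
  shows "E ** matrix_inv E = Finite_Cartesian_Product.mat 1" "matrix_inv E ** E = Finite_Cartesian_Product.mat 1"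
  using someI_ex[OF assms[unfolded invertible_def]] unfolding matrix_inv_def by auto

lemma matrix_inv_unique:
  fixes E D :: "real^'n^'n"
  assumes "D ** E = Finite_Cartesian_Product.mat 1"
  shows "matrix_inv E = D"
proof -
  have inv: "invertible E" using assms invertible_left_inverse by blast
  have ED: "E ** D = Finite_Cartesian_Product.mat 1" using assms matrix_left_right_inverse by blast
  have "matrix_inv E = matrix_inv E ** (E ** D)" by (simp add: ED)
  also have "\<dots> = D" by (simp add: matrix_mul_assoc matrix_inv_props(2)[OF inv])
  finally show ?thesis .
qed

lemma part1:
  fixes E F :: "real^'n^'n" and K :: "real^'m^'n"
  assumes "implicit_conds E F K eps alpha"
  shows "invertible E \<and> positive_system (matrix_inv E ** F) (matrix_inv E ** K) \<and>
         schur_stable (matrix_inv E ** F)"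
proof -
  have eps: "eps > 0" and al: "0 < alpha" "alpha < 1"
    and pdM: "pos_def (E + transpose E - eps *\<^sub>R Finite_Cartesian_Product.mat 1)"
    and MM: "M_matrix E" and Fn: "nonneg_mat F" and Kn: "nonneg_mat K"
    and cs: "\<forall>j. 0 \<le> (\<Sum>i\<in>UNIV. alpha * E $ i $ j - F $ i $ j)"
    using assms unfolding implicit_conds_def by auto
  have Z: "\<forall>i j. i \<noteq> j \<longrightarrow> E$i$j \<le> 0" using MM unfolding M_matrix_def by auto
  have pd: "\<forall>x. x \<noteq> 0 \<longrightarrow> x \<bullet> (E *v x) > 0"
  proof (intro allI impI)
    fix x :: "real^'n" assume x: "x \<noteq> 0"
    let ?M = "E + transpose E - eps *\<^sub>R Finite_Cartesian_Product.mat 1"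
    have "0 < x \<bullet> (?M *v x)" using pdM x unfolding pos_def_def by auto
    also have "x \<bullet> (?M *v x) = (\<Sum>i\<in>UNIV. \<Sum>j\<in>UNIV. x$i * E$i$j * x$j)
        + (\<Sum>i\<in>UNIV. \<Sum>j\<in>UNIV. x$i * E$j$i * x$j)
        - (\<Sum>i\<in>UNIV. \<Sum>j\<in>UNIV. x$i * (eps * (if i = j then 1 else 0)) * x$j)"
      unfolding quad by (simp add: transpose_def Finite_Cartesian_Product.mat_def algebra_simps
          sum.distrib sum_subtractf)
    also have "(\<Sum>i\<in>UNIV. \<Sum>j\<in>UNIV. x$i * E$j$i * x$j) = (\<Sum>i\<in>UNIV. \<Sum>j\<in>UNIV. x$i * E$i$j * x$j)"
      by (subst sum.swap) (simp add: mult_ac)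
    also have "(\<Sum>i\<in>UNIV. \<Sum>j\<in>UNIV. x$i * (eps * (if i = j then 1 else 0)) * x$j)
        = eps * (\<Sum>i\<in>UNIV. x$i * x$i)"
    proof -
      have "\<And>i. (\<Sum>j\<in>UNIV. x$i * (eps * (if i = j then 1 else 0)) * x$j)
         = (\<Sum>j\<in>UNIV. if i = j then eps * (x$i*x$i) else 0)" by (rule sum.cong) auto
      then show ?thesis by (simp add: sum_distrib_left)
    qed
    finally have "0 < 2 * (x \<bullet> (E *v x)) - eps * (\<Sum>i\<in>UNIV. x$i * x$i)"
      unfolding quad by simp
    moreover have "0 \<le> eps * (\<Sum>i\<in>UNIV. x$i * x$i)" using eps by (simp add: sum_nonneg)
    ultimately show "x \<bullet> (E *v x) > 0" by linarith
  qed
  have inv: "invertible E"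
  proof -
    have "\<forall>x. E *v x = 0 \<longrightarrow> x = 0" using pd by force
    then show ?thesis using matrix_left_invertible_ker invertible_left_inverse by blast
  qed
  define Ei where "Ei = matrix_inv E"
  have EEi: "E ** Ei = Finite_Cartesian_Product.mat 1" and EiE: "Ei ** E = Finite_Cartesian_Product.mat 1"
    using matrix_inv_props[OF inv] by (auto simp: Ei_def)
  have Ein: "nonneg_mat Ei"
    unfolding nonneg_mat_def
  proof (intro allI)
    fix i j
    define c where "c = Ei *v axis j 1"
    have "E *v c = axis j 1" unfolding c_def by (simp add: matrix_vector_mul_assoc EEi)
    then have "\<forall>k. 0 \<le> (E *v c)$k" by (simp add: axis_def)
    from Z_pd_monotone[OF Z pd this] have "0 \<le> c $ i" .
    then show "0 \<le> Ei $ i $ j" by (simp add: c_def matrix_vector_mult_basis column_def)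
  qed
  define A where "A = Ei ** F"
  have An: "nonneg_mat A" unfolding A_def by (rule nonneg_mult[OF Ein Fn])
  have Bn: "nonneg_mat (Ei ** K)" by (rule nonneg_mult[OF Ein Kn])
  have pos: "positive_system A (Ei ** K)"
    unfolding positive_system_def
  proof (intro allI impI)
    fix x0 :: "real^'n" and u :: "nat \<Rightarrow> real^'m" and t :: nat assume h: "nonneg_vec x0 \<and> (\<forall>t. nonneg_vec (u t))"
    show "nonneg_vec (traj A (Ei ** K) x0 u t)"
    proof (induct t)
      case 0 then show ?case using h by simp
    next
      case (Suc t)
      have "nonneg_vec (A *v traj A (Ei ** K) x0 u t)" by (rule nonneg_mv[OF An Suc])
      moreover have "nonneg_vec ((Ei ** K) *v u t)" using nonneg_mv[OF Bn] h by auto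
      ultimately show ?case by (simp add: nonneg_vec_def)
    qed
  qed
  have EA: "E ** A = F" unfolding A_def by (simp add: matrix_mul_assoc EEi)
  define w where "w j = (\<Sum>i\<in>UNIV. E$i$j)" for j
  define cF where "cF j = (\<Sum>i\<in>UNIV. F$i$j)" for j
  have cFw: "cF j \<le> alpha * w j" for j
    using cs[rule_format, of j] by (simp add: cF_def w_def sum_subtractf sum_distrib_left)
  have cF0: "0 \<le> cF j" for j using Fn unfolding cF_def nonneg_mat_def by (simp add: sum_nonneg)
  have w0: "0 \<le> w j" for j using cFw[of j] cF0[of j] al
    by (meson dual_order.trans zero_le_mult_iff linorder_not_le)
  have wA: "(\<Sum>i\<in>UNIV. w i * A$i$l) = cF l" for l
  proof -
    have "(\<Sum>i\<in>UNIV. w i * A$i$l) = (\<Sum>k\<in>UNIV. \<Sum>i\<in>UNIV. E$k$i * A$i$l)"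
      unfolding w_def by (simp add: sum_distrib_right) (rule sum.swap)
    also have "\<dots> = (\<Sum>k\<in>UNIV. (E ** A)$k$l)" by (simp add: matrix_matrix_mult_def)
    finally show ?thesis by (simp add: EA cF_def)
  qed
  have schur: "schur_stable A"
    unfolding schur_stable_def
  proof (intro allI impI)
    fix l assume "is_eigenvalue A l"
    then obtain v where v: "v \<noteq> 0" "cmat A *v v = l *s v" unfolding is_eigenvalue_def by auto
    have comp: "l * v$i = (\<Sum>j\<in>UNIV. complex_of_real (A$i$j) * v$j)" for i
    proof -
      have "(l *s v)$i = (cmat A *v v)$i" using v(2) by simp
      then show ?thesis by (simp add: cmat_def matrix_vector_mult_def)
    qed
    have ineq: "cmod l * cmod (v$i) \<le> (\<Sum>j\<in>UNIV. A$i$j * cmod (v$j))" for i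
    proof -
      have "cmod l * cmod (v$i) = cmod (\<Sum>j\<in>UNIV. complex_of_real (A$i$j) * v$j)"
        by (simp add: comp[symmetric] norm_mult)
      also have "\<dots> \<le> (\<Sum>j\<in>UNIV. cmod (complex_of_real (A$i$j) * v$j))" by (rule norm_sum)
      also have "\<dots> = (\<Sum>j\<in>UNIV. A$i$j * cmod (v$j))"
        using An unfolding nonneg_mat_def by (simp add: norm_mult)
      finally show ?thesis .
    qed
    define S where "S = (\<Sum>j\<in>UNIV. w j * cmod (v$j))"
    have S0: "0 \<le> S" unfolding S_def using w0 by (simp add: sum_nonneg)
    have "cmod l * S = (\<Sum>j\<in>UNIV. w j * (cmod l * cmod (v$j)))"
      unfolding S_def by (simp add: sum_distrib_left mult_ac)
    also have "\<dots> \<le> (\<Sum>j\<in>UNIV. w j * (\<Sum>k\<in>UNIV. A$j$k * cmod (v$k)))"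
      by (rule sum_mono) (use w0 ineq in \<open>auto intro: mult_left_mono\<close>)
    also have "\<dots> = (\<Sum>k\<in>UNIV. (\<Sum>j\<in>UNIV. w j * A$j$k) * cmod (v$k))"
      by (simp add: sum_distrib_left sum_distrib_right mult_ac) (rule sum.swap)
    also have "\<dots> = (\<Sum>k\<in>UNIV. cF k * cmod (v$k))" by (simp add: wA)
    also have "\<dots> \<le> (\<Sum>k\<in>UNIV. alpha * w k * cmod (v$k))"
      by (rule sum_mono) (use cFw in \<open>auto intro: mult_right_mono\<close>)
    also have "\<dots> = alpha * S" unfolding S_def by (simp add: sum_distrib_left mult_ac)
    finally have lS: "cmod l * S \<le> alpha * S" .
    show "cmod l < 1"
    proof (cases "S > 0")
      case True
      then have "cmod l \<le> alpha" using lS by simp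
      then show ?thesis using al by simp
    next
      case False
      then have "S = 0" using S0 by simp
      then have each: "w j * cmod (v$j) = 0" for j
        using sum_nonneg_eq_0_iff[of UNIV "\<lambda>j. w j * cmod (v$j)"] w0 unfolding S_def by auto
      obtain i where vi: "v$i \<noteq> 0" using v(1) by (metis Finite_Cartesian_Product.vec_eq_iff zero_index)
      have "(\<Sum>j\<in>UNIV. complex_of_real (A$i$j) * v$j) = 0"
      proof (rule sum.neutral, rule ballI)
        fix j
        show "complex_of_real (A$i$j) * v$j = 0"
        proof (cases "v$j = 0")
          case False
          then have "w j = 0" using each[of j] by simp
          then have "cF j \<le> 0" using cFw[of j] by simp
          then have "cF j = 0" using cF0[of j] by simp
          then have Fz: "F$k$j = 0" for k
            using sum_nonneg_eq_0_iff[of UNIV "\<lambda>k. F$k$j"] Fn unfolding cF_def nonneg_mat_def by auto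
          have "A$i$j = 0" unfolding A_def by (simp add: matrix_matrix_mult_def Fz)
          then show ?thesis by simp
        qed simp
      qed
      then have "l * v$i = 0" using comp[of i] by simp
      then have "l = 0" using vi by simp
      then show ?thesis by simp
    qed
  qed
  show ?thesis using inv pos schur by (simp add: A_def Ei_def)
qed

lemma mpow_nonneg: "nonneg_mat A \<Longrightarrow> nonneg_mat (mpow A k)"
  by (induct k) (auto simp: nonneg_mat_def Finite_Cartesian_Product.mat_def intro: nonneg_mult[unfolded nonneg_mat_def, rule_format])

lemma diag_mult:
  fixes X :: "real^'m^'n"
  shows "((\<chi> i j. if i = j then d i else 0) ** X) $ i $ j = d i * X $ i $ j"
proof -
  have "(\<Sum>k\<in>UNIV. (if i = k then d i else 0) * X$k$j) = (\<Sum>k\<in>UNIV. if i = k then d i * X$k$j else 0)"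
    by (rule sum.cong) auto
  then show ?thesis by (simp add: matrix_matrix_mult_def)
qed

lemma part2:
  fixes A :: "real^'n^'n" and B :: "real^'m^'n"
  assumes An: "nonneg_mat A" and sA: "schur_stable A" and Bn: "nonneg_mat B"
  shows "\<exists>(E::real^'n^'n) (F::real^'n^'n) (K::real^'m^'n) eps alpha.
                 (\<forall>i j. i \<noteq> j \<longrightarrow> E $ i $ j = 0) \<and> (\<forall>i. E $ i $ i > 0) \<and>
                 implicit_conds E F K eps alpha \<and>
                 matrix_inv E ** F = A \<and> matrix_inv E ** K = B"
proof -
  obtain \<beta> c where \<beta>: "0 < \<beta>" "\<beta> < 1" and bd: "\<And>k x y. \<bar>mpow A k $ x $ y\<bar> \<le> c * \<beta>^k"
    using schur_power_bound[OF sA] by blast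
  define cs where "cs k j = (\<Sum>i\<in>UNIV. mpow A k $ i $ j)" for k j
  have cs_nn: "0 \<le> cs k j" for k j
    using mpow_nonneg[OF An, of k] unfolding cs_def nonneg_mat_def by (simp add: sum_nonneg)
  let ?C = "real CARD('n) * \<bar>c\<bar> + 1"
  have csb: "cs k j \<le> ?C * \<beta>^k" for k j
  proof -
    have e: "mpow A k $ i $ j \<le> \<bar>c\<bar> * \<beta>^k" for i
    proof -
      have "mpow A k $ i $ j \<le> c * \<beta>^k" using bd[of k i j] by linarith
      also have "\<dots> \<le> \<bar>c\<bar> * \<beta>^k" using \<beta> by (intro mult_right_mono) auto
      finally show ?thesis .
    qed
    have "cs k j \<le> (\<Sum>i\<in>(UNIV::'n set). \<bar>c\<bar> * \<beta>^k)"
      unfolding cs_def using e by (intro sum_mono) auto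
    also have "\<dots> = real CARD('n) * \<bar>c\<bar> * \<beta>^k" by simp
    also have "\<dots> \<le> ?C * \<beta>^k" using \<beta> by (simp add: mult_right_mono)
    finally show ?thesis .
  qed
  have Cpos: "0 < ?C" by (simp add: add_nonneg_pos)
  obtain N0 where N0: "\<beta>^N0 < 1 / (2 * ?C)"
    using real_arch_pow_inv[of "1 / (2 * ?C)" \<beta>] Cpos \<beta> by auto
  define N where "N = Suc N0"
  have N: "0 < N" by (simp add: N_def)
  have csN: "cs N j \<le> 1/2" for j
  proof -
    have "\<beta>^N \<le> \<beta>^N0" unfolding N_def using \<beta> by (simp add: mult_le_cancel_right1 less_imp_le)
    then have "?C * \<beta>^N \<le> ?C * \<beta>^N0" using Cpos by simp
    also have "\<dots> \<le> ?C * (1 / (2 * ?C))" using Cpos by (intro mult_left_mono[OF less_imp_le[OF N0]]) simp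
    also have "\<dots> = 1/2" using Cpos by simp
    finally show ?thesis using csb[of N j] by simp
  qed
  define \<alpha> where "\<alpha> = root N (1/2)"
  have \<alpha>: "0 < \<alpha>" "\<alpha> < 1" "\<alpha>^N = 1/2"
    using N by (auto simp: \<alpha>_def real_root_gt_zero)
  define T where "T k j = cs k j / \<alpha>^k" for k j
  define d where "d j = (\<Sum>k<N. T k j)" for j
  have cs0: "cs 0 j = 1" for j
    by (simp add: cs_def Finite_Cartesian_Product.mat_def)
  have cs_suc: "cs (Suc k) j = (\<Sum>l\<in>UNIV. cs k l * A$l$j)" for k j
    unfolding cs_def by (simp add: matrix_matrix_mult_def sum_distrib_right) (rule sum.swap)
  have T_nn: "0 \<le> T k j" for k j using cs_nn \<alpha> by (simp add: T_def)
  have d1: "1 \<le> d j" for j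
  proof -
    have "d j = T 0 j + (\<Sum>k<N0. T (Suc k) j)" unfolding d_def N_def by (rule sum.lessThan_Suc_shift)
    moreover have "T 0 j = 1" by (simp add: T_def cs0)
    moreover have "0 \<le> (\<Sum>k<N0. T (Suc k) j)" by (simp add: T_nn sum_nonneg)
    ultimately show ?thesis by simp
  qed
  have dA: "(\<Sum>l\<in>UNIV. d l * A$l$j) \<le> \<alpha> * d j" for j
  proof -
    have "(\<Sum>l\<in>UNIV. d l * A$l$j) = (\<Sum>l\<in>UNIV. \<Sum>k<N. cs k l * A$l$j / \<alpha>^k)"
      unfolding d_def T_def by (intro sum.cong) (simp_all add: sum_distrib_right)
    also have "\<dots> = (\<Sum>k<N. \<Sum>l\<in>UNIV. cs k l * A$l$j / \<alpha>^k)" by (rule sum.swap)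
    also have "\<dots> = (\<Sum>k<N. (\<Sum>l\<in>UNIV. cs k l * A$l$j) / \<alpha>^k)"
      by (simp add: sum_divide_distrib)
    also have "\<dots> = (\<Sum>k<N. \<alpha> * T (Suc k) j)"
      using \<alpha> by (intro sum.cong) (auto simp: cs_suc T_def field_simps)
    also have "\<dots> = \<alpha> * (\<Sum>k<N. T (Suc k) j)" by (simp add: sum_distrib_left)
    also have "(\<Sum>k<N. T (Suc k) j) = d j + T N j - T 0 j"
      using sum.lessThan_Suc_shift[of "\<lambda>k. T k j" N] sum.lessThan_Suc[of "\<lambda>k. T k j" N]
      unfolding d_def by simp
    also have "T 0 j = 1" by (simp add: T_def cs0)
    also have "T N j \<le> 1" using csN[of j] \<alpha> by (simp add: T_def)
    finally show ?thesis using \<alpha> by (simp add: mult_left_mono)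
  qed
  define E :: "real^'n^'n" where "E = (\<chi> i j. if i = j then d i else 0)"
  define Di :: "real^'n^'n" where "Di = (\<chi> i j. if i = j then 1 / d i else 0)"
  define F where "F = E ** A"
  define K where "K = E ** B"
  have dpos: "0 < d i" for i using d1[of i] by simp
  have DiE: "Di ** E = Finite_Cartesian_Product.mat 1"
    unfolding Finite_Cartesian_Product.vec_eq_iff
    using dpos[THEN less_imp_neq, symmetric] by (auto simp: Di_def diag_mult E_def Finite_Cartesian_Product.mat_def)
  have invE: "matrix_inv E = Di" by (rule matrix_inv_unique[OF DiE])
  have r1: "matrix_inv E ** F = A" unfolding invE F_def by (simp add: matrix_mul_assoc DiE)
  have r2: "matrix_inv E ** K = B" unfolding invE K_def by (simp add: matrix_mul_assoc DiE)
  have En: "nonneg_mat E" using dpos unfolding nonneg_mat_def E_def by (simp add: less_imp_le)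
  have Fij: "F$i$j = d i * A$i$j" for i j unfolding F_def E_def by (rule diag_mult)
  have pd: "pos_def (E + transpose E - 1 *\<^sub>R Finite_Cartesian_Product.mat 1)"
    unfolding pos_def_def
  proof (intro allI impI)
    fix x :: "real^'n" assume x: "x \<noteq> 0"
    obtain i where xi: "x$i \<noteq> 0" using x by (metis Finite_Cartesian_Product.vec_eq_iff zero_index)
    let ?M = "E + transpose E - 1 *\<^sub>R Finite_Cartesian_Product.mat 1"
    have row: "(\<Sum>j\<in>UNIV. x$k * ?M$k$j * x$j) = (2 * d k - 1) * (x$k * x$k)" for k
    proof -
      have "(\<Sum>j\<in>UNIV. x$k * ?M$k$j * x$j) = (\<Sum>j\<in>UNIV. if k = j then (2 * d k - 1) * (x$k * x$k) else 0)"
        by (rule sum.cong) (auto simp: E_def transpose_def Finite_Cartesian_Product.mat_def algebra_simps)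
      then show ?thesis by simp
    qed
    have "0 < (\<Sum>k\<in>UNIV. (2 * d k - 1) * (x$k * x$k))"
    proof (rule sum_pos2[of UNIV i])
      show "0 < (2 * d i - 1) * (x$i * x$i)" 
      proof -
        have sq: "0 < x$i * x$i" using xi by (cases "x$i > 0") (auto simp: mult_neg_neg)
        have "0 < 2 * d i - 1" using d1[of i] by linarith
        from this sq show ?thesis by (rule mult_pos_pos)
      qed
      show "\<And>k. k \<in> UNIV \<Longrightarrow> 0 \<le> (2 * d k - 1) * (x$k * x$k)"
      proof -
        fix k have "0 \<le> 2 * d k - 1" using d1[of k] by linarith
        then show "0 \<le> (2 * d k - 1) * (x$k * x$k)" by simp
      qed
    qed simp_all
    then show "0 < x \<bullet> (?M *v x)" unfolding quad row .
  qed
  have MM: "M_matrix E"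
    unfolding M_matrix_def
  proof (intro conjI allI impI)
    fix i j :: 'n assume "i \<noteq> j" then show "E$i$j \<le> 0" by (simp add: E_def)
  next
    fix l assume "is_eigenvalue E l"
    then obtain v where v: "v \<noteq> 0" "cmat E *v v = l *s v" unfolding is_eigenvalue_def by auto
    obtain i where vi: "v$i \<noteq> 0" using v(1) by (metis Finite_Cartesian_Product.vec_eq_iff zero_index)
    have "(cmat E *v v)$i = (\<Sum>j\<in>UNIV. if i = j then complex_of_real (d i) * v$j else 0)"
      unfolding matrix_vector_mult_def cmat_def E_def by (simp only: vec_lambda_beta, rule sum.cong) auto
    also have "\<dots> = complex_of_real (d i) * v$i" by simp
    finally have "l * v$i = complex_of_real (d i) * v$i" using v(2) by simp
    then have "l = complex_of_real (d i)" using vi by simp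
    then show "Re l > 0" using dpos[of i] by simp
  qed
  have col: "0 \<le> (\<Sum>i\<in>UNIV. \<alpha> * E $ i $ j - F $ i $ j)" for j
  proof -
    have "(\<Sum>i\<in>UNIV. \<alpha> * E $ i $ j) = (\<Sum>i\<in>UNIV. if i = j then \<alpha> * d j else 0)"
      by (rule sum.cong) (auto simp: E_def)
    then have "(\<Sum>i\<in>UNIV. \<alpha> * E $ i $ j) = \<alpha> * d j" by simp
    moreover have "(\<Sum>i\<in>UNIV. F $ i $ j) = (\<Sum>l\<in>UNIV. d l * A$l$j)" by (simp add: Fij)
    ultimately show ?thesis using dA[of j] by (simp add: sum_subtractf)
  qed
  have "implicit_conds E F K 1 \<alpha>"
    unfolding implicit_conds_def
    using \<alpha> pd MM nonneg_mult[OF En An] nonneg_mult[OF En Bn] col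
    by (simp add: F_def K_def)
  moreover have "\<forall>i j. i \<noteq> j \<longrightarrow> E $ i $ j = 0" "\<forall>i. E $ i $ i > 0" using dpos by (auto simp: E_def)
  ultimately show ?thesis using r1 r2 by blast
qed

theorem theorem2:
  shows "(\<forall>(E::real^'n^'n) (F::real^'n^'n) (K::real^'m^'n) eps alpha.
            implicit_conds E F K eps alpha \<longrightarrow>
              invertible E \<and>
              positive_system (matrix_inv E ** F) (matrix_inv E ** K) \<and>
              schur_stable (matrix_inv E ** F))
       \<and> (\<forall>(A::real^'n^'n) (B::real^'m^'n).
            nonneg_mat A \<and> schur_stable A \<and> nonneg_mat B \<longrightarrow>
              (\<exists>(E::real^'n^'n) (F::real^'n^'n) (K::real^'m^'n) eps alpha.
                 (\<forall>i j. i \<noteq> j \<longrightarrow> E $ i $ j = 0) \<and> (\<forall>i. E $ i $ i > 0) \<and>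
                 implicit_conds E F K eps alpha \<and>
                 matrix_inv E ** F = A \<and> matrix_inv E ** K = B))"
  using part1 part2 by blast

end
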